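(* Let $0<s\le1$ and $n\in\mathbb{N}$. Then for every $t\in\mathbb{R}$ the operator $B_{30}^{(n)}$ defined in the context satisfies, for all $v\in\dot H^s$, $$\|B_{30}^{(n)}(v,v,v)\|_{\dot H^s}\le\frac{\pi^2}{n^s}\|v\|_{\dot H^0}^2\|v\|_{\dot H^s}.$$
   Context: Write $\mathbb{Z}_0=\mathbb{Z}\setminus\{0\}$. For $s\in\mathbb{R}$, $\dot H^s$ denotes the Hilbert space of complex sequences $v=(v_k)_{k\in\mathbb{Z}_0}$ with $\|v\|_{\dot H^s}^2=\sum_{k\in\mathbb{Z}_0}|k|^{2s}|v_k|^2<\infty$. For $n\in\mathbb{N}$, $\Pi_{-n}$ is the projection $(\Pi_{-n}v)_k=0$ if $|k|\le n$ and $(\Pi_{-n}v)_k=v_k$ if $|k|>n$. For $t\in\mathbb{R}$, $$B_{30}^{(n)}(u,v,w)_k=\sum^{\mathrm{nonres}}_{k_1+k_2+k_3=k}\frac{e^{3i(k_1+k_2)(k_2+k_3)(k_3+k_1)t}}{k_1(k_1+k_2)(k_2+k_3)(k_3+k_1)}u_{k_1}(\Pi_{-n}v)_{k_2}(\Pi_{-n}w)_{k_3},\qquad k\in\mathbb{Z}_0,$$ where the sum runs over $k_1,k_2,k_3\in\mathbb{Z}_0$ with $k_1+k_2+k_3=k$ and $(k_1+k_2)(k_2+k_3)(k_3+k_1)\ne0$. *)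

theory Defs
  imports "HOL-Analysis.Analysis"
begin

text \<open>Sequences indexed by the nonzero integers are modelled as functions
  int \<Rightarrow> complex; the value at index 0 is ignored everywhere.\<close>

definition Z0 :: "int set" where
  "Z0 = {k. k \<noteq> 0}"

definition Hdot_mem :: "real \<Rightarrow> (int \<Rightarrow> complex) \<Rightarrow> bool" where
  "Hdot_mem s v \<longleftrightarrow>
     (\<lambda>k. (real_of_int \<bar>k\<bar>) powr (2 * s) * (cmod (v k))\<^sup>2) summable_on Z0"

definition Hdot_norm :: "real \<Rightarrow> (int \<Rightarrow> complex) \<Rightarrow> real" where
  "Hdot_norm s v =
     sqrt (\<Sum>\<^sub>\<infinity>k\<in>Z0. (real_of_int \<bar>k\<bar>) powr (2 * s) * (cmod (v k))\<^sup>2)"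

definition Pi_neg :: "nat \<Rightarrow> (int \<Rightarrow> complex) \<Rightarrow> (int \<Rightarrow> complex)" where
  "Pi_neg n v = (\<lambda>k. if \<bar>k\<bar> \<le> int n then 0 else v k)"

definition nonres_idx :: "int \<Rightarrow> (int \<times> int) set" where
  "nonres_idx k = {(k1, k2). k1 \<noteq> 0 \<and> k2 \<noteq> 0 \<and> k - k1 - k2 \<noteq> 0 \<and>
      (k1 + k2) * (k2 + (k - k1 - k2)) * ((k - k1 - k2) + k1) \<noteq> 0}"

definition B30 :: "nat \<Rightarrow> real \<Rightarrow> (int \<Rightarrow> complex) \<Rightarrow> (int \<Rightarrow> complex)
                     \<Rightarrow> (int \<Rightarrow> complex) \<Rightarrow> (int \<Rightarrow> complex)" where
  "B30 n t u v w = (\<lambda>k. \<Sum>\<^sub>\<infinity>(k1, k2)\<in>nonres_idx k.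
      (let k3 = k - k1 - k2;
           ph = of_int ((k1 + k2) * (k2 + k3) * (k3 + k1))
       in exp (\<i> * of_real (3 * ph * t)) /
          of_int (k1 * (k1 + k2) * (k2 + k3) * (k3 + k1))
          * u k1 * Pi_neg n v k2 * Pi_neg n w k3))"

end

theory Submission imports Defs begin

lemma fin_le_infsum:
  fixes f :: "'a \<Rightarrow> real"
  assumes "f summable_on A" "\<And>x. x\<in>A \<Longrightarrow> 0 \<le> f x" "finite F" "F \<subseteq> A"
  shows "sum f F \<le> infsum f A"
proof -
  have "infsum f F \<le> infsum f A"
    by (rule infsum_mono2) (use assms in auto)
  thus ?thesis using assms(3) by simp
qed

lemma box_bound:
  fixes f :: "'a \<Rightarrow> real" and g :: "'b \<Rightarrow> real" and \<phi> :: "'c \<Rightarrow> 'a \<times> 'b"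
  assumes f0: "\<And>x. x \<in> D1 \<Longrightarrow> 0 \<le> f x" and g0: "\<And>y. y \<in> D2 \<Longrightarrow> 0 \<le> g y"
    and fC: "\<And>X. finite X \<Longrightarrow> X \<subseteq> D1 \<Longrightarrow> sum f X \<le> Cf"
    and gC: "\<And>Y. finite Y \<Longrightarrow> Y \<subseteq> D2 \<Longrightarrow> sum g Y \<le> Cg"
    and F: "finite F" and inj: "inj_on \<phi> F" and im: "\<phi> ` F \<subseteq> D1 \<times> D2"
  shows "(\<Sum>z\<in>F. f (fst (\<phi> z)) * g (snd (\<phi> z))) \<le> Cf * Cg"
proof -
  define X where "X = fst ` \<phi> ` F"
  define Y where "Y = snd ` \<phi> ` F"
  have XD: "X \<subseteq> D1" and YD: "Y \<subseteq> D2" using im by (auto simp: X_def Y_def)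
  have fX: "finite X" "finite Y" using F by (auto simp: X_def Y_def)
  have "(\<Sum>z\<in>F. f (fst (\<phi> z)) * g (snd (\<phi> z))) = (\<Sum>w\<in>\<phi> ` F. f (fst w) * g (snd w))"
    by (simp add: sum.reindex[OF inj])
  also have "\<dots> \<le> (\<Sum>w\<in>X \<times> Y. f (fst w) * g (snd w))"
  proof (rule sum_mono2)
    show "finite (X \<times> Y)" using fX by simp
    show "\<phi> ` F \<subseteq> X \<times> Y"
    proof
      fix w assume "w \<in> \<phi> ` F"
      then obtain z where z: "z \<in> F" "w = \<phi> z" by auto
      show "w \<in> X \<times> Y" unfolding X_def Y_def z(2)
        using imageI[OF imageI[OF z(1), of \<phi>], of fst] imageI[OF imageI[OF z(1), of \<phi>], of snd]
        by (simp add: mem_Times_iff)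
    qed
    show "\<And>b. b \<in> X \<times> Y - \<phi> ` F \<Longrightarrow> 0 \<le> f (fst b) * g (snd b)"
      using XD YD f0 g0 by (auto intro!: mult_nonneg_nonneg)
  qed
  also have "\<dots> = sum f X * sum g Y"
    by (simp add: sum_product sum.cartesian_product case_prod_beta)
  also have "\<dots> \<le> Cf * Cg"
  proof (rule mult_mono)
    show "sum f X \<le> Cf" using fC fX XD by blast
    show "sum g Y \<le> Cg" using gC fX YD by blast
    show "0 \<le> Cf" using fC[of "{}"] by simp
    show "0 \<le> sum g Y" using g0 YD by (auto intro!: sum_nonneg)
  qed
  finally show ?thesis .
qed

lemma zeta_pos:
  assumes "finite X" "X \<subseteq> {x::int. x > 0}"
  shows "(\<Sum>x\<in>X. 1 / (real_of_int x)^2) \<le> pi^2/6"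
proof -
  have inj: "inj_on (\<lambda>x. nat (x - 1)) X"
  proof (rule inj_onI)
    fix x y assume "x \<in> X" "y \<in> X" "nat (x - 1) = nat (y - 1)"
    moreover have "x > 0" "y > 0" using assms(2) \<open>x \<in> X\<close> \<open>y \<in> X\<close> by auto
    ultimately show "x = y" by (simp add: eq_nat_nat_iff)
  qed
  have S: "(\<lambda>m. 1 / (real m + 1)^2) sums (pi^2/6)"
    using inverse_squares_sums by (simp add: add.commute)
  have "(\<Sum>x\<in>X. 1 / (real_of_int x)^2) = (\<Sum>m\<in>(\<lambda>x. nat (x - 1)) ` X. 1 / (real m + 1)^2)"
    by (subst sum.reindex[OF inj]) (use assms(2) in \<open>auto intro!: sum.cong simp: of_nat_nat\<close>)
  also have "\<dots> \<le> (\<Sum>m. 1 / (real m + 1)^2)"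
    by (rule sum_le_suminf) (use S sums_summable assms(1) in auto)
  also have "\<dots> = pi^2/6" using S sums_unique by metis
  finally show ?thesis .
qed

lemma zeta_Z0:
  assumes "finite X" "X \<subseteq> Z0"
  shows "(\<Sum>x\<in>X. 1 / (real_of_int x)^2) \<le> pi^2/3"
proof -
  define Xp where "Xp = X \<inter> {x. x > 0}"
  define Xn where "Xn = X \<inter> {x. x < 0}"
  have X: "X = Xp \<union> Xn" using assms(2) by (auto simp: Xp_def Xn_def Z0_def)
  have "(\<Sum>x\<in>X. 1 / (real_of_int x)^2) = (\<Sum>x\<in>Xp. 1 / (real_of_int x)^2) + (\<Sum>x\<in>Xn. 1 / (real_of_int x)^2)"
    unfolding X by (rule sum.union_disjoint) (use assms(1) in \<open>auto simp: Xp_def Xn_def\<close>)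
  moreover have "(\<Sum>x\<in>Xp. 1 / (real_of_int x)^2) \<le> pi^2/6"
    by (rule zeta_pos) (use assms(1) in \<open>auto simp: Xp_def\<close>)
  moreover have "(\<Sum>x\<in>Xn. 1 / (real_of_int x)^2) \<le> pi^2/6"
  proof -
    have "(\<Sum>x\<in>Xn. 1 / (real_of_int x)^2) = (\<Sum>x\<in>uminus ` Xn. 1 / (real_of_int x)^2)"
      by (subst sum.reindex) (auto simp: inj_on_def)
    also have "\<dots> \<le> pi^2/6"
      by (rule zeta_pos) (use assms(1) in \<open>auto simp: Xn_def\<close>)
    finally show ?thesis .
  qed
  ultimately show ?thesis by simp
qed

lemma powr_sq: fixes x s :: real assumes "0 \<le> x" shows "(x powr s)\<^sup>2 = x powr (2 * s)"
  by (cases "x = 0") (simp_all add: powr_power)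

lemma pw_real:
  fixes k k1 m p q r :: int and s :: real and n :: nat
  assumes nz: "k \<noteq> 0" "k1 \<noteq> 0" "p \<noteq> 0" "q \<noteq> 0" "r \<noteq> 0"
    and sum: "2 * k = p + q + r" and s: "0 < s" "s \<le> 1" and n: "1 \<le> n" "int n < \<bar>m\<bar>"
  shows "\<bar>real_of_int k\<bar> powr s / \<bar>real_of_int (k1 * p * q * r)\<bar>
    \<le> (1 / real n powr s) * ((1 / \<bar>real_of_int (q * r)\<bar> + 1 / \<bar>real_of_int (p * r)\<bar>
         + 1 / \<bar>real_of_int (p * q)\<bar>) / 2) * \<bar>real_of_int m\<bar> powr s"
proof -
  define K where "K = \<bar>real_of_int k\<bar>"
  define D where "D = \<bar>real_of_int k1\<bar>"
  define P where "P = \<bar>real_of_int p\<bar>"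
  define Q where "Q = \<bar>real_of_int q\<bar>"
  define R where "R = \<bar>real_of_int r\<bar>"
  have K1: "1 \<le> K" using nz(1) unfolding K_def by linarith
  have D1: "1 \<le> D" using nz(2) unfolding D_def by linarith
  have P1: "1 \<le> P" using nz(3) unfolding P_def by linarith
  have Q1: "1 \<le> Q" using nz(4) unfolding Q_def by linarith
  have R1: "1 \<le> R" using nz(5) unfolding R_def by linarith
  have Ks: "K powr s \<le> K" using powr_mono[of s 1 K] K1 s by simp
  have K2: "2 * K \<le> P + Q + R"
  proof -
    have "2 * real_of_int k = real_of_int p + real_of_int q + real_of_int r"
      using sum by (metis of_int_add of_int_mult of_int_numeral)
    thus ?thesis unfolding K_def P_def Q_def R_def by linarith
  qed
  have den: "\<bar>real_of_int (k1 * p * q * r)\<bar> = D * (P * Q * R)"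
    by (simp add: D_def P_def Q_def R_def abs_mult)
  have c_eq: "(1 / \<bar>real_of_int (q * r)\<bar> + 1 / \<bar>real_of_int (p * r)\<bar> + 1 / \<bar>real_of_int (p * q)\<bar>) / 2
      = (P + Q + R) / (2 * (P * Q * R))"
  proof -
    have e: "\<bar>real_of_int (q * r)\<bar> = Q * R" "\<bar>real_of_int (p * r)\<bar> = P * R"
      "\<bar>real_of_int (p * q)\<bar> = P * Q"
      by (simp_all add: P_def Q_def R_def abs_mult)
    show ?thesis unfolding e
      using P1 Q1 R1 by (simp add: field_simps)
  qed
  define c where "c = (P + Q + R) / (2 * (P * Q * R))"
  have PQR: "0 < P * Q * R" using P1 Q1 R1 by simp
  have "K powr s / (D * (P * Q * R)) \<le> K / (D * (P * Q * R))"
    by (rule divide_right_mono) (use Ks PQR D1 in auto)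
  also have "\<dots> \<le> K / (P * Q * R)"
    using PQR D1 K1 by (simp add: divide_simps mult_le_cancel_right1)
  also have "\<dots> \<le> c"
    unfolding c_def using PQR K2 P1 Q1 R1 by (simp add: divide_simps)
  finally have L: "K powr s / (D * (P * Q * R)) \<le> c" .
  have "real n powr s \<le> \<bar>real_of_int m\<bar> powr s"
    by (rule powr_mono2) (use s n in auto)
  moreover have np: "0 < real n powr s" using n by simp
  ultimately have ratio: "1 \<le> (1 / real n powr s) * \<bar>real_of_int m\<bar> powr s"
    by (simp add: divide_simps)
  have c0: "0 \<le> c" unfolding c_def using PQR P1 Q1 R1 by simp
  have "c \<le> c * ((1 / real n powr s) * \<bar>real_of_int m\<bar> powr s)"
    using ratio c0 by (metis mult.right_neutral mult_left_mono)
  with L show ?thesis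
    unfolding den c_eq[folded c_def] K_def by (simp add: ac_simps)
qed

lemma sqinv: "(1 / \<bar>real_of_int (u * w)\<bar>)\<^sup>2 = 1 / (real_of_int u)\<^sup>2 * (1 / (real_of_int w)\<^sup>2)"
  by (simp add: power_mult_distrib power_divide)

lemma c_sq: fixes x y z :: real shows "((x + y + z) / 2)\<^sup>2 \<le> 3/4 * (x\<^sup>2 + y\<^sup>2 + z\<^sup>2)"
proof -
  have "0 \<le> (x - y)\<^sup>2 + (y - z)\<^sup>2 + (x - z)\<^sup>2" by simp
  thus ?thesis by (simp add: power2_eq_square field_simps)
qed

lemma idx_mem:
  assumes "(k1, k2) \<in> nonres_idx k"
  shows "k1 \<noteq> 0" "k2 \<noteq> 0" "k - k1 - k2 \<noteq> 0" "k1 + k2 \<noteq> 0" "k2 + (k - k1 - k2) \<noteq> 0"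
    "(k - k1 - k2) + k1 \<noteq> 0"
  using assms by (auto simp: nonres_idx_def)

lemma scale_bound:
  fixes K D Y m :: real
  assumes "0 < K" "0 < D" "K / D \<le> Y" "0 \<le> m"
  shows "m / D \<le> (1 / K) * Y * m"
proof -
  have "m / D = (1 / K) * (K / D) * m" using assms by (simp add: field_simps)
  also have "\<dots> \<le> (1 / K) * Y * m"
    using assms by (intro mult_right_mono mult_left_mono) auto
  finally show ?thesis .
qed

theorem lemma7p9:
  fixes s t :: real and n :: nat and v :: "int \<Rightarrow> complex"
  assumes "0 < s" and "s \<le> 1" and "1 \<le> n" and "Hdot_mem s v"
  shows "Hdot_mem s (B30 n t v v v) \<and>
         Hdot_norm s (B30 n t v v v)
           \<le> pi\<^sup>2 / (real n) powr s * (Hdot_norm 0 v)\<^sup>2 * Hdot_norm s v"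
proof -
  define a where "a = (\<lambda>j. cmod (v j))"
  define b where "b = (\<lambda>j::int. (real_of_int \<bar>j\<bar>) powr s * cmod (v j))"
  define A2 where "A2 = (\<Sum>\<^sub>\<infinity>k\<in>Z0. (a k)\<^sup>2)"
  define S2 where "S2 = (\<Sum>\<^sub>\<infinity>k\<in>Z0. (b k)\<^sup>2)"
  have a0: "\<And>j. 0 \<le> a j" by (simp add: a_def)
  have b0: "\<And>j. 0 \<le> b j" by (simp add: b_def)
  have bsq: "\<And>k. (b k)\<^sup>2 = (real_of_int \<bar>k\<bar>) powr (2 * s) * (cmod (v k))\<^sup>2"
    by (simp add: b_def power_mult_distrib powr_sq)
  have Smem: "(\<lambda>k. (b k)\<^sup>2) summable_on Z0"
    using assms(4) unfolding Hdot_mem_def bsq .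
  have ab: "(a k)\<^sup>2 \<le> (b k)\<^sup>2" if "k \<in> Z0" for k
  proof -
    have p: "1 \<le> real_of_int \<bar>k\<bar> powr s"
      using that assms(1) by (intro ge_one_powr_ge_zero) (auto simp: Z0_def)
    have "cmod (v k) \<le> real_of_int \<bar>k\<bar> powr s * cmod (v k)"
      using mult_right_mono[OF p norm_ge_zero[of "v k"]] by simp
    hence "a k \<le> b k" unfolding a_def b_def .
    thus ?thesis using a0 by (simp add: power_mono)
  qed
  have Amem: "(\<lambda>k. (a k)\<^sup>2) summable_on Z0"
    by (rule summable_on_comparison_test[OF Smem]) (use ab in auto)
  have A0: "0 \<le> A2" unfolding A2_def by (rule infsum_nonneg) simp
  have S0: "0 \<le> S2" unfolding S2_def by (rule infsum_nonneg) simp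
  have Hn0: "Hdot_norm 0 v = sqrt A2"
    unfolding Hdot_norm_def A2_def a_def by (rule arg_cong[where f=sqrt], rule infsum_cong) (auto simp: Z0_def)
  have Hns: "Hdot_norm s v = sqrt S2"
    unfolding Hdot_norm_def S2_def bsq ..
  have aF: "\<And>X. finite X \<Longrightarrow> X \<subseteq> Z0 \<Longrightarrow> sum (\<lambda>k. (a k)\<^sup>2) X \<le> A2"
    unfolding A2_def by (rule fin_le_infsum[OF Amem]) auto
  have bF: "\<And>X. finite X \<Longrightarrow> X \<subseteq> Z0 \<Longrightarrow> sum (\<lambda>k. (b k)\<^sup>2) X \<le> S2"
    unfolding S2_def by (rule fin_le_infsum[OF Smem]) auto
  have pairF: "\<And>Y. finite Y \<Longrightarrow> Y \<subseteq> Z0 \<times> Z0 \<Longrightarrow>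
      sum (\<lambda>w. (b (fst w))\<^sup>2 * (a (snd w))\<^sup>2) Y \<le> S2 * A2"
  proof -
    fix Y :: "(int \<times> int) set" assume "finite Y" "Y \<subseteq> Z0 \<times> Z0"
    thus "sum (\<lambda>w. (b (fst w))\<^sup>2 * (a (snd w))\<^sup>2) Y \<le> S2 * A2"
      using box_bound[of Z0 "\<lambda>k. (b k)\<^sup>2" Z0 "\<lambda>k. (a k)\<^sup>2" S2 A2 Y id] bF aF by simp
  qed
  have trip: "\<And>F \<phi>. finite F \<Longrightarrow> inj_on \<phi> F \<Longrightarrow> \<phi> ` F \<subseteq> Z0 \<times> (Z0 \<times> Z0) \<Longrightarrow>
      (\<Sum>z\<in>F. (a (fst (\<phi> z)))\<^sup>2 * ((b (fst (snd (\<phi> z))))\<^sup>2 * (a (snd (snd (\<phi> z))))\<^sup>2)) \<le> A2 * (S2 * A2)"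
  proof -
    fix F :: "'x set" and \<phi> :: "'x \<Rightarrow> int \<times> int \<times> int"
    assume "finite F" "inj_on \<phi> F" "\<phi> ` F \<subseteq> Z0 \<times> (Z0 \<times> Z0)"
    thus "(\<Sum>z\<in>F. (a (fst (\<phi> z)))\<^sup>2 * ((b (fst (snd (\<phi> z))))\<^sup>2 * (a (snd (snd (\<phi> z))))\<^sup>2)) \<le> A2 * (S2 * A2)"
      using box_bound[of Z0 "\<lambda>k. (a k)\<^sup>2" "Z0 \<times> Z0" "\<lambda>w. (b (fst w))\<^sup>2 * (a (snd w))\<^sup>2" A2 "S2 * A2" F \<phi>]
        aF pairF by simp
  qed
  have zpair: "\<And>F \<phi>. finite F \<Longrightarrow> inj_on \<phi> F \<Longrightarrow> \<phi> ` F \<subseteq> Z0 \<times> Z0 \<Longrightarrow>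
      (\<Sum>z\<in>F. 1 / (real_of_int (fst (\<phi> z)))\<^sup>2 * (1 / (real_of_int (snd (\<phi> z)))\<^sup>2)) \<le> pi\<^sup>2/3 * (pi\<^sup>2/3)"
  proof -
    fix F :: "'x set" and \<phi> :: "'x \<Rightarrow> int \<times> int"
    assume "finite F" "inj_on \<phi> F" "\<phi> ` F \<subseteq> Z0 \<times> Z0"
    thus "(\<Sum>z\<in>F. 1 / (real_of_int (fst (\<phi> z)))\<^sup>2 * (1 / (real_of_int (snd (\<phi> z)))\<^sup>2)) \<le> pi\<^sup>2/3 * (pi\<^sup>2/3)"
      using box_bound[of Z0 "\<lambda>k. 1 / (real_of_int k)\<^sup>2" Z0 "\<lambda>k. 1 / (real_of_int k)\<^sup>2" "pi\<^sup>2/3" "pi\<^sup>2/3" F \<phi>]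
        zeta_Z0 by simp
  qed
  define G where "G = (\<lambda>k (k1, k2). a k1 * b k2 * a (k - k1 - k2))"
  define c where "c = (\<lambda>k (k1::int, k2::int). (1 / \<bar>real_of_int ((k2 + (k - k1 - k2)) * ((k - k1 - k2) + k1))\<bar>
      + 1 / \<bar>real_of_int ((k1 + k2) * ((k - k1 - k2) + k1))\<bar>
      + 1 / \<bar>real_of_int ((k1 + k2) * (k2 + (k - k1 - k2)))\<bar>) / 2)"
  have G0: "\<And>k z. 0 \<le> G k z" unfolding G_def using a0 b0 by (auto split: prod.splits)
  have c0: "\<And>k z. 0 \<le> c k z" unfolding c_def by (auto split: prod.splits)
  have GF: "sum (\<lambda>z. (G k z)\<^sup>2) F \<le> A2 * (S2 * A2)" if "finite F" "F \<subseteq> nonres_idx k" for k F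
  proof -
    define \<phi> where "\<phi> = (\<lambda>(k1::int, k2::int). (k1, k2, k - k1 - k2))"
    have "sum (\<lambda>z. (G k z)\<^sup>2) F
      = (\<Sum>z\<in>F. (a (fst (\<phi> z)))\<^sup>2 * ((b (fst (snd (\<phi> z))))\<^sup>2 * (a (snd (snd (\<phi> z))))\<^sup>2))"
      by (rule sum.cong) (auto simp: G_def \<phi>_def power_mult_distrib)
    also have "\<dots> \<le> A2 * (S2 * A2)"
    proof (rule trip)
      show "finite F" by fact
      show "inj_on \<phi> F" by (auto simp: inj_on_def \<phi>_def)
      show "\<phi> ` F \<subseteq> Z0 \<times> Z0 \<times> Z0"
        using that(2) idx_mem by (fastforce simp: \<phi>_def Z0_def)
    qed
    finally show ?thesis .
  qed
  have Gsum: "(\<lambda>z. (G k z)\<^sup>2) summable_on nonres_idx k" for k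
    by (rule nonneg_bdd_above_summable_on) (auto intro!: bdd_aboveI2 GF)
  define H where "H = (\<lambda>k. \<Sum>\<^sub>\<infinity>z\<in>nonres_idx k. (G k z)\<^sup>2)"
  have H0: "0 \<le> H k" for k unfolding H_def by (rule infsum_nonneg) simp
  have cF: "sum (\<lambda>z. (c k z)\<^sup>2) F \<le> pi^4/4" if "finite F" "F \<subseteq> nonres_idx k" for k F
  proof -
    define \<phi>1 where "\<phi>1 = (\<lambda>(k1::int, k2::int). (k2 + (k - k1 - k2), (k - k1 - k2) + k1))"
    define \<phi>2 where "\<phi>2 = (\<lambda>(k1::int, k2::int). (k1 + k2, (k - k1 - k2) + k1))"
    define \<phi>3 where "\<phi>3 = (\<lambda>(k1::int, k2::int). (k1 + k2, k2 + (k - k1 - k2)))"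
    define e where "e = (\<lambda>\<phi> z. 1 / (real_of_int (fst (\<phi> z)))\<^sup>2 * (1 / (real_of_int (snd ((\<phi>::int\<times>int\<Rightarrow>int\<times>int) z)))\<^sup>2))"
    have pt: "(c k z)\<^sup>2 \<le> 3/4 * (e \<phi>1 z + e \<phi>2 z + e \<phi>3 z)" for z
      using c_sq unfolding c_def e_def \<phi>1_def \<phi>2_def \<phi>3_def sqinv[symmetric]
      by (auto split: prod.splits)
    have "sum (\<lambda>z. (c k z)\<^sup>2) F \<le> sum (\<lambda>z. 3/4 * (e \<phi>1 z + e \<phi>2 z + e \<phi>3 z)) F"
      by (rule sum_mono) (rule pt)
    also have "\<dots> = 3/4 * (sum (e \<phi>1) F + sum (e \<phi>2) F + sum (e \<phi>3) F)"
      by (simp only: sum_distrib_left[symmetric] sum.distrib)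
    also have "\<dots> \<le> 3/4 * (pi\<^sup>2/3 * (pi\<^sup>2/3) + pi\<^sup>2/3 * (pi\<^sup>2/3) + pi\<^sup>2/3 * (pi\<^sup>2/3))"
    proof -
      have m: "\<And>z. z \<in> F \<Longrightarrow> fst z \<noteq> 0 \<and> snd z \<noteq> 0 \<and> k - fst z - snd z \<noteq> 0 \<and> fst z + snd z \<noteq> 0
          \<and> snd z + (k - fst z - snd z) \<noteq> 0 \<and> (k - fst z - snd z) + fst z \<noteq> 0"
        using that(2) idx_mem by (metis prod.collapse subsetD)
      have "sum (e \<phi>1) F \<le> pi\<^sup>2/3 * (pi\<^sup>2/3)" unfolding e_def
        by (rule zpair[OF that(1)]) (use m in \<open>auto simp: inj_on_def \<phi>1_def Z0_def\<close>)
      moreover have "sum (e \<phi>2) F \<le> pi\<^sup>2/3 * (pi\<^sup>2/3)" unfolding e_def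
        by (rule zpair[OF that(1)]) (use m in \<open>auto simp: inj_on_def \<phi>2_def Z0_def\<close>)
      moreover have "sum (e \<phi>3) F \<le> pi\<^sup>2/3 * (pi\<^sup>2/3)" unfolding e_def
        by (rule zpair[OF that(1)]) (use m in \<open>auto simp: inj_on_def \<phi>3_def Z0_def\<close>)
      ultimately show ?thesis by simp
    qed
    also have "\<dots> = pi^4/4" by (simp add: power2_eq_square power4_eq_xxxx)
    finally show ?thesis .
  qed
  have cGF: "sum (\<lambda>z. c k z * G k z) F \<le> pi\<^sup>2/2 * sqrt (H k)" if "finite F" "F \<subseteq> nonres_idx k" for k F
  proof (rule power2_le_imp_le)
    have "(sum (\<lambda>z. c k z * G k z) F)\<^sup>2 \<le> sum (\<lambda>z. (c k z)\<^sup>2) F * sum (\<lambda>z. (G k z)\<^sup>2) F"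
      by (rule Cauchy_Schwarz_ineq_sum)
    also have "\<dots> \<le> pi^4/4 * H k"
    proof (rule mult_mono)
      show "sum (\<lambda>z. (c k z)\<^sup>2) F \<le> pi^4/4" using cF that .
      show "sum (\<lambda>z. (G k z)\<^sup>2) F \<le> H k" unfolding H_def
        by (rule fin_le_infsum[OF Gsum]) (use that in auto)
    qed (auto intro: sum_nonneg)
    also have "\<dots> = (pi\<^sup>2/2 * sqrt (H k))\<^sup>2"
      using H0[of k] by (simp add: power_mult_distrib power2_eq_square power4_eq_xxxx)
    finally show "(sum (\<lambda>z. c k z * G k z) F)\<^sup>2 \<le> (pi\<^sup>2/2 * sqrt (H k))\<^sup>2" .
    show "0 \<le> pi\<^sup>2/2 * sqrt (H k)" using H0[of k] by simp
  qed
  have cGsum: "(\<lambda>z. c k z * G k z) summable_on nonres_idx k" for k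
    by (rule nonneg_bdd_above_summable_on) (use c0 G0 in \<open>auto intro!: bdd_aboveI2 cGF\<close>)
  have cGinf: "(\<Sum>\<^sub>\<infinity>z\<in>nonres_idx k. c k z * G k z) \<le> pi\<^sup>2/2 * sqrt (H k)" for k
    by (rule infsum_le_finite_sums[OF cGsum]) (rule cGF)
  define T where "T = (\<lambda>k. (\<lambda>(k1, k2).
      (let k3 = k - k1 - k2;
           ph = of_int ((k1 + k2) * (k2 + k3) * (k3 + k1))
       in exp (\<i> * of_real (3 * ph * t)) /
          of_int (k1 * (k1 + k2) * (k2 + k3) * (k3 + k1))
          * v k1 * Pi_neg n v k2 * Pi_neg n v k3)))"
  have BT: "B30 n t v v v k = (\<Sum>\<^sub>\<infinity>z\<in>nonres_idx k. T k z)" for k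
    by (simp add: B30_def T_def)
  have Tnorm: "cmod (T k (k1, k2)) = a k1 * cmod (Pi_neg n v k2) * cmod (Pi_neg n v (k - k1 - k2))
      / \<bar>real_of_int (k1 * (k1 + k2) * (k2 + (k - k1 - k2)) * ((k - k1 - k2) + k1))\<bar>" for k k1 k2
    unfolding T_def Let_def prod.case norm_mult norm_divide norm_exp_i_times norm_of_int a_def
    by simp
  have tb: "cmod (T k z) \<le> (1 / \<bar>real_of_int k\<bar> powr s) * ((1 / real n powr s) * (c k z * G k z))"
    if k: "k \<in> Z0" and z: "z \<in> nonres_idx k" for k z
  proof -
    obtain k1 k2 where zz: "z = (k1, k2)" by (cases z)
    note m = idx_mem[OF z[unfolded zz]]
    show ?thesis
    proof (cases "int n < \<bar>k2\<bar> \<and> int n < \<bar>k - k1 - k2\<bar>")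
      case True
      hence Pv: "Pi_neg n v k2 = v k2" "Pi_neg n v (k - k1 - k2) = v (k - k1 - k2)"
        by (auto simp: Pi_neg_def)
      have pw: "\<bar>real_of_int k\<bar> powr s / \<bar>real_of_int (k1 * (k1 + k2) * (k2 + (k - k1 - k2)) * ((k - k1 - k2) + k1))\<bar>
        \<le> (1 / real n powr s) * c k z * \<bar>real_of_int k2\<bar> powr s"
        unfolding zz c_def prod.case
        by (rule pw_real) (use m k assms True in \<open>auto simp: Z0_def\<close>)
      have "cmod (T k z) = (a k1 * a k2 * a (k - k1 - k2))
          / \<bar>real_of_int (k1 * (k1 + k2) * (k2 + (k - k1 - k2)) * ((k - k1 - k2) + k1))\<bar>"
        unfolding zz Tnorm Pv by (simp add: a_def)
      also have "\<dots> \<le> (1 / \<bar>real_of_int k\<bar> powr s) * ((1 / real n powr s) * c k z * \<bar>real_of_int k2\<bar> powr s)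
          * (a k1 * a k2 * a (k - k1 - k2))"
        by (rule scale_bound[OF _ _ pw]) (use m k a0 in \<open>auto simp: Z0_def\<close>)
      also have "\<dots> = (1 / \<bar>real_of_int k\<bar> powr s) * ((1 / real n powr s) * (c k z * G k z))"
        by (simp add: zz G_def b_def a_def)
      finally show ?thesis .
    next
      case False
      hence "Pi_neg n v k2 = 0 \<or> Pi_neg n v (k - k1 - k2) = 0"
        by (auto simp: Pi_neg_def)
      hence "cmod (T k z) = 0" unfolding zz Tnorm by auto
      thus ?thesis using c0[of k z] G0[of k z] by simp
    qed
  qed
  have Bb: "\<bar>real_of_int k\<bar> powr s * cmod (B30 n t v v v k) \<le> (1 / real n powr s) * (pi\<^sup>2/2 * sqrt (H k))"
    if k: "k \<in> Z0" for k
  proof -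
    define h where "h = (\<lambda>z. (1 / \<bar>real_of_int k\<bar> powr s) * ((1 / real n powr s) * (c k z * G k z)))"
    have hs: "h summable_on nonres_idx k" unfolding h_def
      by (intro summable_on_cmult_right cGsum)
    have ns: "(\<lambda>z. norm (T k z)) summable_on nonres_idx k"
      by (rule summable_on_comparison_test[OF hs]) (use tb k in \<open>auto simp: h_def\<close>)
    have Kp: "0 < \<bar>real_of_int k\<bar> powr s" using k by (simp add: Z0_def)
    have "cmod (B30 n t v v v k) \<le> (\<Sum>\<^sub>\<infinity>z\<in>nonres_idx k. norm (T k z))"
      unfolding BT by (rule norm_infsum_bound) (use ns in simp)
    also have "\<dots> \<le> infsum h (nonres_idx k)"
      by (rule infsum_mono[OF ns hs]) (use tb k in \<open>auto simp: h_def\<close>)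
    also have "\<dots> = (1 / \<bar>real_of_int k\<bar> powr s) * ((1 / real n powr s) * (\<Sum>\<^sub>\<infinity>z\<in>nonres_idx k. c k z * G k z))"
      by (simp only: h_def infsum_cmult_right')
    also have "\<dots> \<le> (1 / \<bar>real_of_int k\<bar> powr s) * ((1 / real n powr s) * (pi\<^sup>2/2 * sqrt (H k)))"
      by (intro mult_left_mono cGinf) auto
    finally have "cmod (B30 n t v v v k) \<le> (1 / \<bar>real_of_int k\<bar> powr s) * ((1 / real n powr s) * (pi\<^sup>2/2 * sqrt (H k)))" .
    hence "\<bar>real_of_int k\<bar> powr s * cmod (B30 n t v v v k) \<le> \<bar>real_of_int k\<bar> powr s *
        ((1 / \<bar>real_of_int k\<bar> powr s) * ((1 / real n powr s) * (pi\<^sup>2/2 * sqrt (H k))))"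
      by (rule mult_left_mono) (use Kp in simp)
    also have "\<dots> = (1 / real n powr s) * (pi\<^sup>2/2 * sqrt (H k))"
      using Kp by simp
    finally show ?thesis .
  qed
  define w where "w = (\<lambda>k. (real_of_int \<bar>k\<bar>) powr (2 * s) * (cmod (B30 n t v v v k))\<^sup>2)"
  have w0: "\<And>k. 0 \<le> w k" unfolding w_def by simp
  have wb: "w k \<le> (1 / real n powr s)\<^sup>2 * (pi^4/4) * H k" if k: "k \<in> Z0" for k
  proof -
    have "w k = (\<bar>real_of_int k\<bar> powr s * cmod (B30 n t v v v k))\<^sup>2"
      unfolding w_def by (simp add: power_mult_distrib powr_sq)
    also have "\<dots> \<le> ((1 / real n powr s) * (pi\<^sup>2/2 * sqrt (H k)))\<^sup>2"
      by (rule power_mono[OF Bb[OF k]]) simp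
    also have "\<dots> = (1 / real n powr s)\<^sup>2 * ((pi\<^sup>2)\<^sup>2/4) * (sqrt (H k))\<^sup>2"
      by (simp add: power_mult_distrib power_divide)
    also have "\<dots> = (1 / real n powr s)\<^sup>2 * (pi^4/4) * H k"
      using H0[of k] by (simp flip: power_mult)
    finally show ?thesis .
  qed
  have HK: "sum H K \<le> A2 * (S2 * A2)" if "finite K" for K
  proof -
    define f where "f = (\<lambda>(k, z). (G k z)\<^sup>2)"
    have inner: "((\<lambda>z. f (k, z)) has_sum H k) (nonres_idx k)" for k
      unfolding f_def H_def prod.case by (rule has_sum_infsum[OF Gsum])
    have gs: "(H has_sum sum H K) K" using that by simp
    have fs: "f summable_on Sigma K nonres_idx"
      by (rule summable_on_SigmaI[OF inner]) (use that in \<open>auto simp: f_def\<close>)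
    have fh: "(f has_sum sum H K) (Sigma K nonres_idx)"
      by (rule has_sum_SigmaI[OF inner gs fs])
    show ?thesis
    proof (rule has_sum_le_finite_sums[OF fh])
      fix F assume F: "finite F" "F \<subseteq> Sigma K nonres_idx"
      define \<phi> where "\<phi> = (\<lambda>(k::int, (k1::int, k2::int)). (k1, k2, k - k1 - k2))"
      have "sum f F = (\<Sum>z\<in>F. (a (fst (\<phi> z)))\<^sup>2 * ((b (fst (snd (\<phi> z))))\<^sup>2 * (a (snd (snd (\<phi> z))))\<^sup>2))"
        by (rule sum.cong) (auto simp: f_def G_def \<phi>_def power_mult_distrib)
      also have "\<dots> \<le> A2 * (S2 * A2)"
      proof (rule trip)
        show "finite F" by fact
        show "inj_on \<phi> F"
        proof (rule inj_onI)
          fix x y assume "x \<in> F" "y \<in> F" "\<phi> x = \<phi> y"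
          thus "x = y"
            by (cases x, cases y) (auto simp: \<phi>_def split: prod.splits)
        qed
        show "\<phi> ` F \<subseteq> Z0 \<times> Z0 \<times> Z0"
        proof
          fix y assume "y \<in> \<phi> ` F"
          then obtain k k1 k2 where x: "(k, (k1, k2)) \<in> F" "y = \<phi> (k, (k1, k2))" by auto
          hence "(k1, k2) \<in> nonres_idx k" using F(2) by auto
          from idx_mem[OF this] show "y \<in> Z0 \<times> Z0 \<times> Z0" by (simp add: x(2) \<phi>_def Z0_def)
        qed
      qed
      finally show "sum f F \<le> A2 * (S2 * A2)" .
    qed
  qed
  define Bd where "Bd = (1 / real n powr s)\<^sup>2 * (pi^4/4) * (A2 * (S2 * A2))"
  have wF: "sum w K \<le> Bd" if "finite K" "K \<subseteq> Z0" for K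
  proof -
    have "sum w K \<le> sum (\<lambda>k. (1 / real n powr s)\<^sup>2 * (pi^4/4) * H k) K"
      by (rule sum_mono) (use wb that in auto)
    also have "\<dots> = (1 / real n powr s)\<^sup>2 * (pi^4/4) * sum H K"
      by (simp add: sum_distrib_left)
    also have "\<dots> \<le> Bd" unfolding Bd_def
      by (rule mult_left_mono[OF HK[OF that(1)]]) simp
    finally show ?thesis .
  qed
  have wsum: "w summable_on Z0"
    by (rule nonneg_bdd_above_summable_on) (use w0 wF in \<open>auto intro!: bdd_aboveI2\<close>)
  have winf: "infsum w Z0 \<le> Bd"
    by (rule infsum_le_finite_sums[OF wsum]) (rule wF)
  have mem: "Hdot_mem s (B30 n t v v v)"
    using wsum unfolding Hdot_mem_def w_def .
  define R where "R = pi\<^sup>2 / (real n) powr s * A2 * sqrt S2"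
  have R0: "0 \<le> R" unfolding R_def using A0 S0 by simp
  have "Hdot_norm s (B30 n t v v v) = sqrt (infsum w Z0)"
    unfolding Hdot_norm_def w_def ..
  also have "\<dots> \<le> R"
  proof (rule real_le_lsqrt[OF R0])
    have "R\<^sup>2 = (1 / real n powr s)\<^sup>2 * pi^4 * (A2 * (S2 * A2))"
      unfolding R_def using S0 by (simp add: power_mult_distrib power_divide power2_eq_square power4_eq_xxxx)
    moreover have "0 \<le> (1 / real n powr s)\<^sup>2 * pi^4 * (A2 * (S2 * A2))"
      using A0 S0 by simp
    moreover have "Bd = ((1 / real n powr s)\<^sup>2 * pi^4 * (A2 * (S2 * A2))) / 4"
      unfolding Bd_def by simp
    ultimately have "Bd \<le> R\<^sup>2" by linarith
    with winf show "infsum w Z0 \<le> R\<^sup>2" by simp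
  qed
  also have "\<dots> = pi\<^sup>2 / (real n) powr s * (Hdot_norm 0 v)\<^sup>2 * Hdot_norm s v"
    unfolding R_def Hn0 Hns using A0 by simp
  finally show ?thesis using mem by simp
qed

end
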